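(* Let $\ell$ and $w$ be linear spaces of sequences in $\mathbb{K}$ ($\mathbb{K}\in\{\mathbb{R},\mathbb{C}\}$), each endowed with a norm, quasi-norm or $\alpha$-norm, satisfying: (1) $\ell \subset c_0$ and $w\subset c_0$; (2) for all $x\in w$ and all $k\in\mathbb{N}$ one has $|x_k|\le \|x\|_w$; (3) $\ell$ is a linear subspace of $w$, the identity (embedding) operator $I\colon \ell\to w$ satisfies $0<\|I\|\le 1$, where $\|I\|=\sup_{x\in B_\ell}\|x\|_w$, and $e^j\in B_\ell$ for every $j\in\mathbb{N}$. Then $I$ is maximally non-compact, i.e. $\alpha(I)=\|I\|$.
   Context: $B_X$ denotes the closed unit ball of a (quasi/$\alpha$-)normed space $X$, and $e^j$ denotes the sequence with $1$ in the $j$-th position and $0$ elsewhere. $c_0$ is the space of scalar sequences converging to $0$. For a bounded map $T\colon X\to Y$ between (quasi/$\alpha$-)normed spaces, the ball measure of non-compactness is $\alpha(T)=\inf\{r>0:\ T(B_X)\subset\bigcup_{i=1}^m (y_i+rB_Y)\text{ for some } m\in\mathbb{N},\ y_1,\dots,y_m\in Y\}$, and the operator norm is $\|T\|=\sup_{x\in B_X}\|Tx\|$. $T$ is called maximally non-compact if $\alpha(T)=\|T\|$. *)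

theory Defs
  imports "HOL-Analysis.Analysis"
begin

text \<open>Sequences in K are functions nat => 'a, with 'a a real normed field
  (i.e. R or C). Pointwise operations are written out explicitly.\<close>

definition seq_zero :: "nat \<Rightarrow> 'a::real_normed_field" where
  "seq_zero = (\<lambda>_. 0)"

definition seq_add :: "(nat \<Rightarrow> 'a::real_normed_field) \<Rightarrow> (nat \<Rightarrow> 'a) \<Rightarrow> (nat \<Rightarrow> 'a)" where
  "seq_add x y = (\<lambda>k. x k + y k)"

definition seq_scale :: "'a::real_normed_field \<Rightarrow> (nat \<Rightarrow> 'a) \<Rightarrow> (nat \<Rightarrow> 'a)" where
  "seq_scale c x = (\<lambda>k. c * x k)"

definition seq_diff :: "(nat \<Rightarrow> 'a::real_normed_field) \<Rightarrow> (nat \<Rightarrow> 'a) \<Rightarrow> (nat \<Rightarrow> 'a)" where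
  "seq_diff x y = (\<lambda>k. x k - y k)"

definition unit_seq :: "nat \<Rightarrow> nat \<Rightarrow> 'a::real_normed_field" where
  "unit_seq j = (\<lambda>k. if k = j then 1 else 0)"

definition c0 :: "(nat \<Rightarrow> 'a::real_normed_field) set" where
  "c0 = {x. x \<longlonglongrightarrow> 0}"

definition lin_subspace :: "(nat \<Rightarrow> 'a::real_normed_field) set \<Rightarrow> bool" where
  "lin_subspace X \<longleftrightarrow> seq_zero \<in> X \<and> (\<forall>x\<in>X. \<forall>y\<in>X. seq_add x y \<in> X)
     \<and> (\<forall>c. \<forall>x\<in>X. seq_scale c x \<in> X)"

definition is_seq_norm :: "(nat \<Rightarrow> 'a::real_normed_field) set \<Rightarrow> ((nat \<Rightarrow> 'a) \<Rightarrow> real) \<Rightarrow> bool" where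
  "is_seq_norm X N \<longleftrightarrow> (\<forall>x\<in>X. 0 \<le> N x) \<and> (\<forall>x\<in>X. N x = 0 \<longleftrightarrow> x = seq_zero)
     \<and> (\<forall>c. \<forall>x\<in>X. N (seq_scale c x) = norm c * N x)
     \<and> (\<forall>x\<in>X. \<forall>y\<in>X. N (seq_add x y) \<le> N x + N y)"

definition is_seq_quasinorm :: "(nat \<Rightarrow> 'a::real_normed_field) set \<Rightarrow> ((nat \<Rightarrow> 'a) \<Rightarrow> real) \<Rightarrow> bool" where
  "is_seq_quasinorm X N \<longleftrightarrow> (\<forall>x\<in>X. 0 \<le> N x) \<and> (\<forall>x\<in>X. N x = 0 \<longleftrightarrow> x = seq_zero)
     \<and> (\<forall>c. \<forall>x\<in>X. N (seq_scale c x) = norm c * N x)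
     \<and> (\<exists>C\<ge>1. \<forall>x\<in>X. \<forall>y\<in>X. N (seq_add x y) \<le> C * (N x + N y))"

definition is_seq_alpha_norm :: "real \<Rightarrow> (nat \<Rightarrow> 'a::real_normed_field) set \<Rightarrow> ((nat \<Rightarrow> 'a) \<Rightarrow> real) \<Rightarrow> bool" where
  "is_seq_alpha_norm \<alpha> X N \<longleftrightarrow> 0 < \<alpha> \<and> \<alpha> \<le> 1 \<and> (\<forall>x\<in>X. 0 \<le> N x) \<and> (\<forall>x\<in>X. N x = 0 \<longleftrightarrow> x = seq_zero)
     \<and> (\<forall>c. \<forall>x\<in>X. N (seq_scale c x) = norm c powr \<alpha> * N x)
     \<and> (\<forall>x\<in>X. \<forall>y\<in>X. N (seq_add x y) \<le> N x + N y)"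

definition is_gen_norm :: "(nat \<Rightarrow> 'a::real_normed_field) set \<Rightarrow> ((nat \<Rightarrow> 'a) \<Rightarrow> real) \<Rightarrow> bool" where
  "is_gen_norm X N \<longleftrightarrow> is_seq_norm X N \<or> is_seq_quasinorm X N \<or> (\<exists>\<alpha>. is_seq_alpha_norm \<alpha> X N)"

definition closed_unit_ball :: "(nat \<Rightarrow> 'a::real_normed_field) set \<Rightarrow> ((nat \<Rightarrow> 'a) \<Rightarrow> real) \<Rightarrow> (nat \<Rightarrow> 'a) set" where
  "closed_unit_ball X N = {x\<in>X. N x \<le> 1}"

definition shifted_ball :: "(nat \<Rightarrow> 'a::real_normed_field) set \<Rightarrow> ((nat \<Rightarrow> 'a) \<Rightarrow> real) \<Rightarrow> (nat \<Rightarrow> 'a) \<Rightarrow> real \<Rightarrow> (nat \<Rightarrow> 'a) set" where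
  "shifted_ball Y N y r = (\<lambda>b. seq_add y (seq_scale (of_real r) b)) ` closed_unit_ball Y N"

definition ball_mnc :: "(nat \<Rightarrow> 'a::real_normed_field) set \<Rightarrow> ((nat \<Rightarrow> 'a) \<Rightarrow> real)
   \<Rightarrow> (nat \<Rightarrow> 'a) set \<Rightarrow> ((nat \<Rightarrow> 'a) \<Rightarrow> real) \<Rightarrow> ((nat \<Rightarrow> 'a) \<Rightarrow> (nat \<Rightarrow> 'a)) \<Rightarrow> real" where
  "ball_mnc X NX Y NY T = Inf {r. 0 < r \<and> (\<exists>F. finite F \<and> F \<noteq> {} \<and> F \<subseteq> Y \<and>
       T ` closed_unit_ball X NX \<subseteq> (\<Union>y\<in>F. shifted_ball Y NY y r))}"

definition op_norm :: "(nat \<Rightarrow> 'a::real_normed_field) set \<Rightarrow> ((nat \<Rightarrow> 'a) \<Rightarrow> real)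
   \<Rightarrow> ((nat \<Rightarrow> 'a) \<Rightarrow> real) \<Rightarrow> ((nat \<Rightarrow> 'a) \<Rightarrow> (nat \<Rightarrow> 'a)) \<Rightarrow> real" where
  "op_norm X NX NY T = Sup ((\<lambda>x. NY (T x)) ` closed_unit_ball X NX)"

end

theory Submission
  imports Defs
begin

theorem mainTheorem1:
  fixes l w :: "(nat \<Rightarrow> 'a::real_normed_field) set"
    and Nl Nw :: "(nat \<Rightarrow> 'a) \<Rightarrow> real"
  assumes "lin_subspace l" and "lin_subspace w"
    and "is_gen_norm l Nl" and "is_gen_norm w Nw"
    and "l \<subseteq> c0" and "w \<subseteq> c0"
    and "\<forall>x\<in>w. \<forall>k. norm (x k) \<le> Nw x"
    and "l \<subseteq> w"
    and "bdd_above ((\<lambda>x. Nw (id x)) ` closed_unit_ball l Nl)"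
    and "0 < op_norm l Nl Nw id" and "op_norm l Nl Nw id \<le> 1"
    and "\<forall>j. unit_seq j \<in> closed_unit_ball l Nl"
  shows "ball_mnc l Nl w Nw id = op_norm l Nl Nw id"
proof -
  define N where "N = op_norm l Nl Nw id"
  define S where "S = {r. 0 < r \<and> (\<exists>F. finite F \<and> F \<noteq> {} \<and> F \<subseteq> w \<and>
       id ` closed_unit_ball l Nl \<subseteq> (\<Union>y\<in>F. shifted_ball w Nw y r))}"
  have Npos: "0 < N" and N1: "N \<le> 1" using assms(10,11) N_def by auto
  have le: "Nw x \<le> N" if "x \<in> closed_unit_ball l Nl" for x
  proof -
    have "Nw (id x) \<le> N" unfolding N_def op_norm_def
      by (rule cSup_upper) (use that assms(9) in auto)
    then show ?thesis by simp
  qed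
  have NS: "N \<in> S"
  proof -
    have "id ` closed_unit_ball l Nl \<subseteq> shifted_ball w Nw seq_zero N"
    proof
      fix z assume "z \<in> id ` closed_unit_ball l Nl"
      then have xB: "z \<in> closed_unit_ball l Nl" by simp
      then have xw: "z \<in> w" using assms(8) unfolding closed_unit_ball_def by auto
      define b where "b = seq_scale (of_real (1/N)) z"
      have bw: "b \<in> w" using assms(2) xw unfolding lin_subspace_def b_def by auto
      have Nz: "Nw z \<le> N" using le xB by auto
      have nc: "norm (of_real (1/N) :: 'a) = 1/N" using Npos by (simp add: norm_divide)
      have "Nw b \<le> 1"
      proof -
        from assms(4) consider "is_seq_norm w Nw" | "is_seq_quasinorm w Nw"
          | \<alpha> where "is_seq_alpha_norm \<alpha> w Nw" unfolding is_gen_norm_def by auto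
        then show ?thesis
        proof cases
          case 1
          then have "Nw b = (1/N) * Nw z" unfolding b_def is_seq_norm_def using xw Npos nc by (simp del: of_real_divide)
          then show ?thesis using Nz Npos by (simp add: divide_le_eq)
        next
          case 2
          then have "Nw b = (1/N) * Nw z" unfolding b_def is_seq_quasinorm_def using xw Npos nc by (simp del: of_real_divide)
          then show ?thesis using Nz Npos by (simp add: divide_le_eq)
        next
          case 3
          then have a: "0 < \<alpha>" "\<alpha> \<le> 1" and e: "Nw b = (1/N) powr \<alpha> * Nw z"
            unfolding b_def is_seq_alpha_norm_def using xw Npos nc by (auto simp del: of_real_divide)
          have "N powr 1 \<le> N powr \<alpha>" using a Npos N1 by (intro powr_mono') auto
          then have NN: "N \<le> N powr \<alpha>" by simp
          have "Nw b = Nw z / N powr \<alpha>" using e Npos by (simp add: powr_divide)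
          also have "\<dots> \<le> 1" using Nz NN Npos by (simp add: divide_le_eq)
          finally show ?thesis .
        qed
      qed
      then have "b \<in> closed_unit_ball w Nw" using bw unfolding closed_unit_ball_def by auto
      moreover have "z = seq_add seq_zero (seq_scale (of_real N) b)"
        unfolding seq_add_def seq_zero_def seq_scale_def b_def using Npos by auto
      ultimately show "z \<in> shifted_ball w Nw seq_zero N" unfolding shifted_ball_def by auto
    qed
    moreover have "seq_zero \<in> w" using assms(2) unfolding lin_subspace_def by auto
    ultimately show ?thesis unfolding S_def using Npos by (intro CollectI conjI exI[of _ "{seq_zero}"]) auto
  qed
  have ge1: "1 \<le> r" if "r \<in> S" for r
  proof (rule ccontr)
    assume "\<not> 1 \<le> r"
    then have r1: "r < 1" by simp
    from that obtain F where r0: "0 < r" and F: "finite F" "F \<subseteq> w"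
      and cov: "id ` closed_unit_ball l Nl \<subseteq> (\<Union>y\<in>F. shifted_ball w Nw y r)"
      unfolding S_def by auto
    have "\<forall>y\<in>F. y \<longlonglongrightarrow> 0" using F assms(6) unfolding c0_def by auto
    then have "\<forall>y\<in>F. eventually (\<lambda>j. norm (y j) < 1 - r) sequentially"
      using r1 by (auto simp: tendsto_iff dist_norm)
    then have "eventually (\<lambda>j. \<forall>y\<in>F. norm (y j) < 1 - r) sequentially"
      using F(1) by (simp add: eventually_ball_finite)
    then obtain j where j: "\<forall>y\<in>F. norm (y j) < 1 - r"
      using eventually_sequentially by auto
    have "unit_seq j \<in> id ` closed_unit_ball l Nl" using assms(12) by auto
    with cov obtain y b where y: "y \<in> F" and b: "b \<in> closed_unit_ball w Nw"
      and eq: "unit_seq j = seq_add y (seq_scale (of_real r) b)"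
      unfolding shifted_ball_def by auto
    have bw: "b \<in> w" and bN: "Nw b \<le> 1" using b unfolding closed_unit_ball_def by auto
    have "norm (b j) \<le> Nw b" using assms(7) bw by blast
    then have "norm (b j) \<le> 1" using bN by linarith
    have "(1::'a) = y j + of_real r * b j" using fun_cong[OF eq, of j]
      by (simp add: unit_seq_def seq_add_def seq_scale_def)
    then have "norm (1::'a) \<le> norm (y j) + norm (of_real r * b j)"
      by (metis norm_triangle_ineq)
    also have "norm (of_real r * b j) = r * norm (b j)" using r0 by (simp add: norm_mult)
    also have "\<dots> \<le> r" using \<open>norm (b j) \<le> 1\<close> r0 by (simp add: mult_left_le)
    finally have "1 \<le> norm (y j) + r" by simp
    moreover have "norm (y j) < 1 - r" using j y by blast
    ultimately show False by linarith
  qed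
  have "Inf S = N"
  proof (rule antisym)
    show "Inf S \<le> N" by (rule cInf_lower[OF NS]) (auto simp: S_def bdd_below_def intro!: exI[of _ 0])
    show "N \<le> Inf S" using NS ge1 N1 by (intro cInf_greatest) force+
  qed
  then show ?thesis unfolding ball_mnc_def N_def S_def by simp
qed

end
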